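(* Let $X$ be a connected separable Tychonoff space and let $Z$ be a topological space having the same multi-deck as $X$, i.e.\ there is a bijection $f\colon X \to Z$ such that $X\setminus\{x\}$ is homeomorphic to $Z \setminus\{f(x)\}$ for every $x \in X$. Then $Z$ is a connected separable Tychonoff space.
   Context: The multi-deck of a space $X$ is the multiset $\{[X\setminus\{x\}]_\sim : x \in X\}$ of homeomorphism classes of the subspaces $X\setminus\{x\}$, recording for each class how many points $x$ give it; two spaces have the same multi-deck exactly when there is a bijection $f\colon X\to Z$ with $X\setminus\{x\}\cong Z\setminus\{f(x)\}$ for all $x$. Tychonoff means completely regular and $T_1$. *)

theory Defs
  imports "HOL-Analysis.Analysis"
begin

definition tychonoff_space :: "'a topology \<Rightarrow> bool" where
  "tychonoff_space X \<longleftrightarrow> completely_regular_space X \<and> t1_space X"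

end

theory Submission
  imports Defs
begin

definition pieces :: "'a topology \<Rightarrow> nat \<Rightarrow> 'a set \<Rightarrow> bool" where
  "pieces X n S \<longleftrightarrow> (\<exists>P. (\<forall>i<n. openin X (P i) \<and> P i \<noteq> {}) \<and>
      (\<forall>i<n. \<forall>j<n. i \<noteq> j \<longrightarrow> P i \<inter> P j = {}) \<and> (\<Union>i<n. P i) = S)"

lemma pieces_transfer:
  assumes S: "openin X S" and T: "openin Z T"
    and hm: "homeomorphic_maps (subtopology X S) (subtopology Z T) h g"
    and p: "pieces Z n T"
  shows "pieces X n S"
proof -
  obtain P where P: "\<forall>i<n. openin Z (P i) \<and> P i \<noteq> {}"
    "\<forall>i<n. \<forall>j<n. i \<noteq> j \<longrightarrow> P i \<inter> P j = {}" "(\<Union>i<n. P i) = T"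
    using p unfolding pieces_def by blast
  have Ssub: "S \<subseteq> topspace X" and Tsub: "T \<subseteq> topspace Z"
    using S T openin_subset by auto
  have hc: "continuous_map (subtopology X S) (subtopology Z T) h"
    and gc: "continuous_map (subtopology Z T) (subtopology X S) g"
    and gh: "\<forall>x\<in>S. g (h x) = x" and hg: "\<forall>y\<in>T. h (g y) = y"
    using hm Ssub Tsub by (auto simp: homeomorphic_maps_def inf.absorb2)
  have hS: "h x \<in> T" if "x \<in> S" for x
    using hc that Ssub by (auto simp: continuous_map_def inf.absorb2)
  have gT: "g y \<in> S" if "y \<in> T" for y
    using gc that Tsub by (auto simp: continuous_map_def inf.absorb2)
  define Q where "Q i = {x \<in> S. h x \<in> P i}" for i
  have "\<forall>i<n. openin X (Q i) \<and> Q i \<noteq> {}"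
  proof (intro allI impI conjI)
    fix i assume i: "i < n"
    have PT: "P i \<subseteq> T" using P(3) i by blast
    have "openin (subtopology Z T) (P i)"
      using P(1) i PT by (simp add: openin_open_subtopology T)
    then have "openin (subtopology X S) {x \<in> topspace (subtopology X S). h x \<in> P i}"
      using hc openin_continuous_map_preimage by blast
    moreover have "{x \<in> topspace (subtopology X S). h x \<in> P i} = Q i"
      using Ssub by (auto simp: Q_def)
    ultimately have "openin (subtopology X S) (Q i)" by simp
    then show "openin X (Q i)"
      using openin_open_subtopology[OF S] by blast
    obtain y where "y \<in> P i" using P(1) i by blast
    then have "g y \<in> Q i" using PT gT hg by (auto simp: Q_def)
    then show "Q i \<noteq> {}" by blast
  qed
  moreover have "\<forall>i<n. \<forall>j<n. i \<noteq> j \<longrightarrow> Q i \<inter> Q j = {}"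
    using P(2) by (auto simp: Q_def)
  moreover have "(\<Union>i<n. Q i) = S"
    using P(3) hS by (auto simp: Q_def)
  ultimately show ?thesis unfolding pieces_def by blast
qed

lemma pieces2I:
  assumes "openin X A" "openin X B" "A \<noteq> {}" "B \<noteq> {}" "A \<inter> B = {}" "A \<union> B = S"
  shows "pieces X 2 S"
  unfolding pieces_def
proof (intro exI[of _ "\<lambda>i::nat. if i = 0 then A else B"] conjI allI impI)
  fix i j :: nat assume "i < 2" "j < 2" "i \<noteq> j"
  then show "(if i = 0 then A else B) \<inter> (if j = 0 then A else B) = {}"
    using assms by (auto simp: Int_commute)
next
  show "(\<Union>i::nat<2. if i = 0 then A else B) = S"
    using assms by (auto simp: lessThan_nat_numeral)
qed (use assms in auto)

lemma pieces3I:
  assumes "openin X A" "openin X B" "openin X C" "A \<noteq> {}" "B \<noteq> {}" "C \<noteq> {}"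
    "A \<inter> B = {}" "A \<inter> C = {}" "B \<inter> C = {}" "A \<union> B \<union> C = S"
  shows "pieces X 3 S"
  unfolding pieces_def
proof (intro exI[of _ "\<lambda>i::nat. if i = 0 then A else if i = 1 then B else C"] conjI allI impI)
  fix i j :: nat assume "i < 3" "j < 3" "i \<noteq> j"
  then show "(if i = 0 then A else if i = 1 then B else C) \<inter> (if j = 0 then A else if j = 1 then B else C) = {}"
    using assms by (auto simp: Int_commute less_Suc_eq numeral_3_eq_3)
next
  show "(\<Union>i::nat<3. if i = 0 then A else if i = 1 then B else C) = S"
    using assms by (auto simp: lessThan_nat_numeral)
qed (use assms in auto)

lemma pieces2E:
  assumes "pieces X 2 S" "x \<in> S"
  obtains A B where "openin X A" "openin X B" "A \<noteq> {}" "B \<noteq> {}" "A \<inter> B = {}" "A \<union> B = S" "x \<in> A"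
proof -
  obtain P where P: "\<forall>i::nat<2. openin X (P i) \<and> P i \<noteq> {}"
    "\<forall>i<2. \<forall>j<2. i \<noteq> j \<longrightarrow> P i \<inter> P j = {}" "(\<Union>i<2. P i) = S"
    using assms(1) unfolding pieces_def by blast
  have U: "P 0 \<union> P 1 = S" using P(3) by (auto simp: lessThan_nat_numeral)
  have D: "P 0 \<inter> P 1 = {}" using P(2) by auto
  show ?thesis
  proof (cases "x \<in> P 0")
    case True then show ?thesis using that[of "P 0" "P 1"] P(1) U D by auto
  next
    case False then show ?thesis using that[of "P 1" "P 0"] P(1) U D assms(2) by auto
  qed
qed




lemma clop:
  assumes X: "connected_space X" and "openin X U" "openin X U'" "U \<inter> U' = {}"
    "U \<union> U' = topspace X - {x}" "x \<in> topspace X"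
    "openin X V" "openin X V'" "V \<inter> V' = {}" "V \<union> V' = topspace X - {y}"
    "y \<in> U'" "x \<in> V'"
  shows "U \<inter> V = {}"
proof -
  have "topspace X - (U \<inter> V) = U' \<union> V'"
    using assms openin_subset by blast
  then have "closedin X (U \<inter> V)"
    using assms openin_subset by (auto simp: closedin_def)
  moreover have "openin X (U \<inter> V)" using assms by auto
  ultimately have "U \<inter> V = {} \<or> U \<inter> V = topspace X"
    using X connected_space_clopen_in by blast
  then show ?thesis using assms by blast
qed

lemma cut_piece:
  assumes X: "connected_space X" and cut: "\<forall>u\<in>topspace X. pieces X 2 (topspace X - {u})"
    and x: "x \<in> topspace X" and U: "openin X U" and V: "openin X V" and UV: "U \<inter> V = {}"
    "U \<union> V = topspace X - {x}" "V \<noteq> {}" and u: "u \<in> U"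
  shows "\<not> connectedin X (U - {u})"
proof -
  have ut: "u \<in> topspace X" using u UV by blast
  have "x \<in> topspace X - {u}" using x u UV by blast
  then obtain P Q where PQ: "openin X P" "openin X Q" "P \<noteq> {}" "Q \<noteq> {}" "P \<inter> Q = {}"
    "P \<union> Q = topspace X - {u}" "x \<in> P"
    using pieces2E cut ut by metis
  have VQ: "V \<inter> Q = {}"
    using clop[OF X V U _ _ x PQ(2) PQ(1) _ _ u PQ(7)] UV PQ by blast
  have QU: "Q \<subseteq> U - {u}" using VQ PQ UV by blast
  have VP: "V \<subseteq> P" using VQ PQ(6) UV u by blast
  have PU: "P \<inter> U \<noteq> {}"
  proof
    assume PU0: "P \<inter> U = {}"
    have "topspace X - U = P"
    proof
      show "topspace X - U \<subseteq> P" using VP PQ(7) UV(2) by blast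
      show "P \<subseteq> topspace X - U" using PU0 PQ(6) by blast
    qed
    then have "closedin X U" using PQ(1) U openin_subset by (auto simp: closedin_def)
    then have "U = {} \<or> U = topspace X" using X U connected_space_clopen_in by blast
    then show False using u UV(2) x by blast
  qed
  show ?thesis
  proof
    assume c: "connectedin X (U - {u})"
    have s1: "U - {u} \<subseteq> P \<union> Q" using PQ(6) UV(2) by blast
    have s2: "P \<inter> Q \<inter> (U - {u}) = {}" using PQ(5) by blast
    have s3: "P \<inter> (U - {u}) \<noteq> {}" using PU PQ(6) by blast
    have s4: "Q \<inter> (U - {u}) \<noteq> {}" using QU PQ(4) by blast
    show False using connectedinD[OF c PQ(1) PQ(2) s1 s2 s3 s4] .
  qed
qed




lemma triod_countable:
  assumes X: "connected_space X" and sep: "separable_space X"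
    and p3: "\<forall>x\<in>topspace X. pieces X 3 (topspace X - {x})"
  shows "countable (topspace X)"
proof -
  obtain C where C: "countable C" "C \<subseteq> topspace X" "X closure_of C = topspace X"
    using sep unfolding separable_space_def by blast
  have meet: "U \<inter> C \<noteq> {}" if "openin X U" "U \<noteq> {}" for U
  proof -
    from \<open>U \<noteq> {}\<close> obtain p where "p \<in> U" by blast
    then have "p \<in> X closure_of C" using C that openin_subset by blast
    then show ?thesis using \<open>p \<in> U\<close> that by (auto simp: in_closure_of)
  qed
  have "\<forall>x\<in>topspace X. \<exists>P. (\<forall>i::nat<3. openin X (P i) \<and> P i \<noteq> {}) \<and>
      (\<forall>i<3. \<forall>j<3. i \<noteq> j \<longrightarrow> P i \<inter> P j = {}) \<and> (\<Union>i<3. P i) = topspace X - {x}"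
    using p3 unfolding pieces_def by blast
  then obtain P where P: "\<And>x. x \<in> topspace X \<Longrightarrow> (\<forall>i::nat<3. openin X (P x i) \<and> P x i \<noteq> {}) \<and>
      (\<forall>i<3. \<forall>j<3. i \<noteq> j \<longrightarrow> P x i \<inter> P x j = {}) \<and> (\<Union>i<3. P x i) = topspace X - {x}"
    by metis
  have Po: "\<And>x i. x \<in> topspace X \<Longrightarrow> i < 3 \<Longrightarrow> openin X (P x i)"
    and Pn: "\<And>x i. x \<in> topspace X \<Longrightarrow> i < 3 \<Longrightarrow> P x i \<noteq> {}"
    and Pd: "\<And>x i j. x \<in> topspace X \<Longrightarrow> i < 3 \<Longrightarrow> j < 3 \<Longrightarrow> i \<noteq> j \<Longrightarrow> P x i \<inter> P x j = {}"
    and Pu: "\<And>x. x \<in> topspace X \<Longrightarrow> (\<Union>i<3. P x i) = topspace X - {x}"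
    using P by auto
  have "\<forall>x\<in>topspace X. \<forall>i. \<exists>c. i < 3 \<longrightarrow> c \<in> C \<inter> P x i"
    using Po Pn meet by blast
  then obtain d where d: "\<And>x i. x \<in> topspace X \<Longrightarrow> i < 3 \<Longrightarrow> d x i \<in> C \<inter> P x i"
    by metis
  define \<phi> where "\<phi> x = (d x 0, d x 1, d x 2)" for x
  have "inj_on \<phi> (topspace X)"
  proof (rule inj_onI, rule ccontr)
    fix x y assume x: "x \<in> topspace X" and y: "y \<in> topspace X" and eq: "\<phi> x = \<phi> y" and ne: "x \<noteq> y"
    have deq: "d x i = d y i" if "i < 3" for i
    proof -
      have "i = 0 \<or> i = 1 \<or> i = 2" using that by auto
      then show ?thesis using eq by (auto simp: \<phi>_def)
    qed
    obtain j where j: "j < 3" "y \<in> P x j" using Pu[OF x] y ne by blast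
    obtain k where k: "k < 3" "x \<in> P y k" using Pu[OF y] x ne by blast
    have key: "i = k" if i: "i < 3" "i \<noteq> j" for i
    proof (rule ccontr)
      assume ik: "i \<noteq> k"
      define U' where "U' = (\<Union>l\<in>{l. l<3 \<and> l \<noteq> i}. P x l)"
      define V' where "V' = (\<Union>l\<in>{l. l<3 \<and> l \<noteq> i}. P y l)"
      have "P x i \<inter> P y i = {}"
      proof (rule clop[OF X, of _ U' x _ V' y])
        show "openin X (P x i)" "openin X (P y i)" using Po x y i by blast+
        show "openin X U'" unfolding U'_def using Po[OF x] by (auto intro!: openin_Union)
        show "openin X V'" unfolding V'_def using Po[OF y] by (auto intro!: openin_Union)
        show "P x i \<inter> U' = {}" unfolding U'_def using Pd[OF x, of i] i by auto
        show "P y i \<inter> V' = {}" unfolding V'_def using Pd[OF y, of i] i by auto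
        have "P x i \<union> U' = (\<Union>i<3. P x i)" unfolding U'_def using i by auto
        then show "P x i \<union> U' = topspace X - {x}" using Pu[OF x] by simp
        have "P y i \<union> V' = (\<Union>i<3. P y i)" unfolding V'_def using i by auto
        then show "P y i \<union> V' = topspace X - {y}" using Pu[OF y] by simp
        show "x \<in> topspace X" by (rule x)
        show "y \<in> U'" unfolding U'_def using j i by blast
        show "x \<in> V'" unfolding V'_def using k ik by blast
      qed
      then show False using d[OF x i(1)] d[OF y i(1)] deq[OF i(1)] by auto
    qed
    have "(j+1) mod 3 < 3" "(j+1) mod 3 \<noteq> j" "(j+2) mod 3 < 3" "(j+2) mod 3 \<noteq> j"
      using j(1) by presburger+
    then have "(j+1) mod 3 = k" "(j+2) mod 3 = k" using key by blast+
    then show False by presburger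
  qed
  moreover have "\<phi> ` topspace X \<subseteq> C \<times> C \<times> C"
    using d by (auto simp: \<phi>_def)
  then have "countable (\<phi> ` topspace X)"
  proof -
    have "countable (C \<times> C \<times> C)" using C(1) by simp
    then show ?thesis using \<open>\<phi> ` topspace X \<subseteq> C \<times> C \<times> C\<close> countable_subset by blast
  qed
  ultimately show ?thesis using countable_image_inj_on by blast
qed




lemma conn_uncountable:
  assumes X: "connected_space X" and cr: "completely_regular_space X" and t1: "t1_space X"
    and a: "a \<in> topspace X" and b: "b \<in> topspace X" and ab: "a \<noteq> b"
  shows "uncountable (topspace X)"
proof
  assume cnt: "countable (topspace X)"
  have cl: "closedin X {b}" using t1 b by (simp add: t1_space_closedin_singleton)
  have ab': "a \<in> topspace X - {b}" using a ab by simp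
  obtain f :: "_ \<Rightarrow> real" where f: "continuous_map X (top_of_set {0..1}) f" "f a = 0" "f ` {b} \<subseteq> {1}"
    using cr[unfolded completely_regular_space_def, rule_format, OF conjI[OF cl ab']] by blast
  have "continuous_map X euclideanreal f" using f(1) continuous_map_in_subtopology by blast
  then have "connectedin euclideanreal (f ` topspace X)"
    using X connectedin_continuous_map_image connectedin_topspace by blast
  then have "connected (f ` topspace X)" by simp
  moreover have "0 \<in> f ` topspace X" "1 \<in> f ` topspace X" using f a b by force+
  ultimately have "{0..1} \<subseteq> f ` topspace X" using connected_contains_Icc by blast
  moreover have "uncountable {0..1::real}" by (simp add: uncountable_closed_interval)
  ultimately show False using cnt countable_image countable_subset by blast
qed





lemma hm_facts:
  assumes hm: "homeomorphic_maps (subtopology X S) (subtopology Z T) h g"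
    and Ssub: "S \<subseteq> topspace X" and Tsub: "T \<subseteq> topspace Z"
  shows "continuous_map (subtopology X S) (subtopology Z T) h"
    "continuous_map (subtopology Z T) (subtopology X S) g"
    "\<And>x. x \<in> S \<Longrightarrow> g (h x) = x" "\<And>y. y \<in> T \<Longrightarrow> h (g y) = y"
    "\<And>x. x \<in> S \<Longrightarrow> h x \<in> T" "\<And>y. y \<in> T \<Longrightarrow> g y \<in> S"
proof -
  show hc: "continuous_map (subtopology X S) (subtopology Z T) h"
    and gc: "continuous_map (subtopology Z T) (subtopology X S) g"
    and "\<And>x. x \<in> S \<Longrightarrow> g (h x) = x" and "\<And>y. y \<in> T \<Longrightarrow> h (g y) = y"
    using hm Ssub Tsub by (auto simp: homeomorphic_maps_def inf.absorb2)
  show "h x \<in> T" if "x \<in> S" for x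
    using hc that Ssub by (auto simp: continuous_map_def inf.absorb2)
  show "g y \<in> S" if "y \<in> T" for y
    using gc that Tsub by (auto simp: continuous_map_def inf.absorb2)
qed

lemma pre_open:
  assumes S: "openin X S" and hm: "homeomorphic_maps (subtopology X S) (subtopology Z T) h g"
    and Tsub: "T \<subseteq> topspace Z" and U: "openin Z U" and UT: "U \<subseteq> T"
  shows "openin X {x \<in> S. h x \<in> U}"
proof -
  have Ssub: "S \<subseteq> topspace X" using S openin_subset by blast
  have hc: "continuous_map (subtopology X S) (subtopology Z T) h"
    using hm_facts[OF hm Ssub Tsub] by blast
  have "openin (subtopology Z T) U"
    using U UT by (metis inf.absorb1 openin_subtopology_Int2 inf_commute)
  then have "openin (subtopology X S) {x \<in> topspace (subtopology X S). h x \<in> U}"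
    using hc openin_continuous_map_preimage by blast
  moreover have "{x \<in> topspace (subtopology X S). h x \<in> U} = {x \<in> S. h x \<in> U}"
    using Ssub by auto
  ultimately have "openin (subtopology X S) {x \<in> S. h x \<in> U}" by simp
  then show ?thesis using openin_open_subtopology[OF S] by blast
qed

lemma Z_t1:
  assumes inf: "infinite (topspace Z)"
    and sub: "\<forall>w\<in>topspace Z. t1_space (subtopology Z (topspace Z - {w}))"
  shows "t1_space Z"
  unfolding t1_space_def
proof (intro ballI impI)
  fix x y assume x: "x \<in> topspace Z" and y: "y \<in> topspace Z" and xy: "x \<noteq> y"
  have "topspace Z - {x, y} \<noteq> {}"
  proof
    assume "topspace Z - {x, y} = {}"
    then have "topspace Z \<subseteq> {x, y}" by blast
    then show False using inf finite_subset by blast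
  qed
  then obtain w where w: "w \<in> topspace Z" "w \<noteq> x" "w \<noteq> y" by blast
  have "t1_space (subtopology Z (topspace Z - {w}))" using sub w(1) by blast
  moreover have "x \<in> topspace (subtopology Z (topspace Z - {w}))"
    "y \<in> topspace (subtopology Z (topspace Z - {w}))" using x y w by auto
  ultimately obtain U where U: "openin (subtopology Z (topspace Z - {w})) U" "x \<in> U" "y \<notin> U"
    using xy unfolding t1_space_def by blast
  then obtain T where T: "openin Z T" "U = T \<inter> (topspace Z - {w})"
    unfolding openin_subtopology by blast
  show "\<exists>U. openin Z U \<and> x \<in> U \<and> y \<notin> U"
    using T U y w by blast
qed

lemma Z_sep:
  assumes sub: "\<forall>w\<in>topspace Z. separable_space (subtopology Z (topspace Z - {w}))"
  shows "separable_space Z"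
proof (cases "topspace Z = {}")
  case True
  then show ?thesis unfolding separable_space_def
    by (intro exI[of _ "{}"]) auto
next
  case False
  then obtain w where w: "w \<in> topspace Z" by blast
  obtain C where C: "countable C" "C \<subseteq> topspace (subtopology Z (topspace Z - {w}))"
    "subtopology Z (topspace Z - {w}) closure_of C = topspace (subtopology Z (topspace Z - {w}))"
    using sub w unfolding separable_space_def by blast
  have wC: "insert w C \<subseteq> topspace Z" using C(2) w by auto
  have "topspace Z - {w} \<subseteq> Z closure_of C"
    using C(3) closure_of_subtopology_subset[of Z "topspace Z - {w}" C] by auto
  also have "\<dots> \<subseteq> Z closure_of (insert w C)" by (rule closure_of_mono) blast
  finally have "topspace Z - {w} \<subseteq> Z closure_of (insert w C)" .
  moreover have "w \<in> Z closure_of (insert w C)"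
    using closure_of_subset wC by blast
  ultimately have "topspace Z \<subseteq> Z closure_of (insert w C)" by blast
  then have "Z closure_of (insert w C) = topspace Z"
    by (simp add: closure_of_subset_topspace subset_antisym)
  then show ?thesis unfolding separable_space_def using C(1) wC
    by (intro exI[of _ "insert w C"]) auto
qed




lemma paste2:
  assumes A: "openin Z A" and B: "openin Z B" and AB: "A \<union> B = topspace Z"
    and f1: "continuous_map (subtopology Z A) Y f1" and f2: "continuous_map (subtopology Z B) Y f2"
    and eq: "\<And>x. x \<in> A \<Longrightarrow> x \<in> B \<Longrightarrow> f1 x = f2 x"
  shows "continuous_map Z Y (\<lambda>x. if x \<in> A then f1 x else f2 x)"
proof (rule pasting_lemma[where I = "{True, False}" and T = "\<lambda>b. if b then A else B"
      and f = "\<lambda>b. if b then f1 else f2"])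
  show "openin Z (if i then A else B)" if "i \<in> {True, False}" for i using A B by simp
  show "continuous_map (subtopology Z (if i then A else B)) Y (if i then f1 else f2)"
    if "i \<in> {True, False}" for i using f1 f2 by simp
  show "(if i then f1 else f2) x = (if j then f1 else f2) x"
    if "i \<in> {True, False}" "j \<in> {True, False}" "x \<in> topspace Z \<inter> (if i then A else B) \<inter> (if j then A else B)"
    for i j x using that eq by (cases i; cases j) auto
  show "\<exists>j. j \<in> {True, False} \<and> x \<in> (if j then A else B) \<and>
          (if x \<in> A then f1 x else f2 x) = (if j then f1 else f2) x" if "x \<in> topspace Z" for x
  proof (cases "x \<in> A")
    case True then show ?thesis by (intro exI[of _ True]) simp
  next
    case False then show ?thesis using that AB by (intro exI[of _ False]) auto
  qed
qed

lemma Z_cr: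
  assumes inf: "infinite (topspace Z)" and t1: "t1_space Z"
    and sub: "\<forall>w\<in>topspace Z. completely_regular_space (subtopology Z (topspace Z - {w}))"
  shows "completely_regular_space Z"
  unfolding completely_regular_space_def
proof (intro allI impI)
  fix C z assume Cz: "closedin Z C \<and> z \<in> topspace Z - C"
  then have C: "closedin Z C" and z: "z \<in> topspace Z" "z \<notin> C" by auto
  have Csub: "C \<subseteq> topspace Z" using C closedin_subset by blast
  have odel: "openin Z (topspace Z - {p})" for p
    using t1 by (simp add: t1_space_openin_delete_alt)
  have one: "(1::real) \<in> topspace (top_of_set {0..1})" by simp
  have zero: "(0::real) \<in> topspace (top_of_set {0..1})" by simp
  show "\<exists>f::_\<Rightarrow>real. continuous_map Z (top_of_set {0..1}) f \<and> f z = 0 \<and> f ` C \<subseteq> {1}"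
  proof (cases "\<exists>w\<in>topspace Z. w \<notin> C \<and> w \<noteq> z")
    case False
    then have Ceq: "C = topspace Z - {z}" using Csub z by blast
    have o1: "openin Z {z}"
    proof -
      have "openin Z (topspace Z - C)" using C closedin_def by blast
      moreover have "topspace Z - C = {z}" using Ceq z by blast
      ultimately show ?thesis by simp
    qed
    have "continuous_map Z (top_of_set {0..1}) (\<lambda>x. if x \<in> {z} then (0::real) else 1)"
      by (rule paste2[OF o1 odel]) (use z one zero in auto)
    then show ?thesis using Ceq by (intro exI[of _ "\<lambda>x. if x \<in> {z} then (0::real) else 1"]) auto
  next
    case True
    then obtain w where w: "w \<in> topspace Z" "w \<notin> C" "w \<noteq> z" by blast
    have "topspace Z - {z, w} \<noteq> {}"
    proof
      assume "topspace Z - {z, w} = {}"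
      then have "topspace Z \<subseteq> {z, w}" by blast
      then show False using inf finite_subset by blast
    qed
    then obtain w' where w': "w' \<in> topspace Z" "w' \<noteq> z" "w' \<noteq> w" by blast
    define Y' where "Y' = subtopology Z (topspace Z - {w'})"
    have reg: "regular_space Y'"
      unfolding Y'_def using sub w'(1) completely_regular_imp_regular_space by blast
    have clw: "closedin Y' {w}"
      unfolding Y'_def closedin_subtopology
      using closedin_t1_singleton[OF t1 w(1)] w' w(1) by (intro exI[of _ "{w}"]) auto
    have zY: "z \<in> topspace Y' - {w}" using z w w' by (auto simp: Y'_def)
    obtain U V where UV: "openin Y' U" "openin Y' V" "z \<in> U" "{w} \<subseteq> V" "disjnt U V"
      using reg[unfolded regular_space_def, rule_format, OF conjI[OF clw zY]] by blast
    have oU: "openin Z U" and oV: "openin Z V"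
      using UV openin_open_subtopology[OF odel[of w']] by (auto simp: Y'_def)
    define Y where "Y = subtopology Z (topspace Z - {w})"
    define C' where "C' = (C \<union> (topspace Z - U)) \<inter> (topspace Z - {w})"
    have clC: "closedin Y C'"
      unfolding Y_def closedin_subtopology C'_def
      using C oU by (intro exI[of _ "C \<union> (topspace Z - U)"]) auto
    have zC: "z \<in> topspace Y - C'" using z w UV(3) by (auto simp: Y_def C'_def)
    have crY: "completely_regular_space Y" unfolding Y_def using sub w(1) by blast
    obtain g :: "_ \<Rightarrow> real" where g: "continuous_map Y (top_of_set {0..1}) g" "g z = 0" "g ` C' \<subseteq> {1}"
      using crY[unfolded completely_regular_space_def, rule_format, OF conjI[OF clC zC]] by blast
    have wV: "w \<in> V" using UV(4) by blast
    have cont: "continuous_map Z (top_of_set {0..1}) (\<lambda>x. if x \<in> topspace Z - {w} then g x else 1)"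
    proof (rule paste2[OF odel[of w] oV])
      show "topspace Z - {w} \<union> V = topspace Z" using wV oV openin_subset w(1) by blast
      show "continuous_map (subtopology Z (topspace Z - {w})) (top_of_set {0..1}) g"
        using g(1) by (simp add: Y_def)
      show "continuous_map (subtopology Z V) (top_of_set {0..1::real}) (\<lambda>x. 1::real)" by simp
      show "g x = 1" if "x \<in> topspace Z - {w}" "x \<in> V" for x
      proof -
        have "x \<notin> U" using that UV(5) by (auto simp: disjnt_def)
        then have "x \<in> C'" using that by (auto simp: C'_def)
        then show ?thesis using g(3) by blast
      qed
    qed
    show ?thesis
    proof (intro exI[of _ "\<lambda>x. if x \<in> topspace Z - {w} then g x else 1"] conjI)
      show "continuous_map Z (top_of_set {0..1}) (\<lambda>x. if x \<in> topspace Z - {w} then g x else 1)"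
        by (rule cont)
      show "(if z \<in> topspace Z - {w} then g z else 1) = 0" using z w g(2) by simp
      show "(\<lambda>x. if x \<in> topspace Z - {w} then g x else 1) ` C \<subseteq> {1}"
      proof
        fix y assume "y \<in> (\<lambda>x. if x \<in> topspace Z - {w} then g x else 1) ` C"
        then obtain x where x: "x \<in> C" "y = (if x \<in> topspace Z - {w} then g x else 1)" by blast
        show "y \<in> {1}"
        proof (cases "x \<in> topspace Z - {w}")
          case True
          then have "x \<in> C'" using x(1) by (auto simp: C'_def)
          then show ?thesis using x(2) True g(3) by auto
        next
          case False then show ?thesis using x(2) False by (metis singletonI)
        qed
      qed
    qed
  qed
qed




lemma sepA:
  assumes X: "connected_space X" and t1X: "t1_space X" and t1Z: "t1_space Z"
    and cut: "\<forall>u\<in>topspace X. pieces X 2 (topspace X - {u})"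
    and noiso: "\<forall>z\<in>topspace Z. \<not> openin Z {z}"
    and HZ: "\<forall>w\<in>topspace Z. \<exists>x\<in>topspace X.
              subtopology X (topspace X - {x}) homeomorphic_space subtopology Z (topspace Z - {w})"
    and A: "openin Z A" and B: "openin Z B" and AB: "A \<inter> B = {}" "A \<union> B = topspace Z"
    and Bne: "B \<noteq> {}" and a: "a \<in> A"
  shows "\<not> connectedin Z (A - {a})"
proof
  assume c: "connectedin Z (A - {a})"
  obtain b where b: "b \<in> B" using Bne by blast
  have bZ: "b \<in> topspace Z" using b AB by blast
  obtain y where y: "y \<in> topspace X" and
    hom: "subtopology X (topspace X - {y}) homeomorphic_space subtopology Z (topspace Z - {b})"
    using HZ bZ by blast
  then obtain h g where hm: "homeomorphic_maps (subtopology X (topspace X - {y})) (subtopology Z (topspace Z - {b})) h g"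
    unfolding homeomorphic_space_def by blast
  have SXs: "topspace X - {y} \<subseteq> topspace X" and SZs: "topspace Z - {b} \<subseteq> topspace Z" by auto
  note F = hm_facts[OF hm SXs SZs]
  have oSX: "openin X (topspace X - {y})" using t1X by (simp add: t1_space_openin_delete_alt)
  have AZ: "A \<subseteq> topspace Z - {b}" using AB b by blast
  have oBb: "openin Z (B - {b})" using t1Z B by (simp add: t1_space_openin_delete_alt)
  have BbZ: "B - {b} \<subseteq> topspace Z - {b}" using AB by blast
  define W where "W = {p \<in> topspace X - {y}. h p \<in> A}"
  define W2 where "W2 = {p \<in> topspace X - {y}. h p \<in> B - {b}}"
  have oW: "openin X W" unfolding W_def by (rule pre_open[OF oSX hm SZs A AZ])
  have oW2: "openin X W2" unfolding W2_def by (rule pre_open[OF oSX hm SZs oBb BbZ])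
  have Bb: "B - {b} \<noteq> {}"
  proof
    assume "B - {b} = {}"
    then have "B = {b}" using b by blast
    then show False using noiso bZ B by auto
  qed
  have WW2: "W \<inter> W2 = {}" using AB by (auto simp: W_def W2_def)
  have WU: "W \<union> W2 = topspace X - {y}"
  proof
    show "W \<union> W2 \<subseteq> topspace X - {y}" by (auto simp: W_def W2_def)
    show "topspace X - {y} \<subseteq> W \<union> W2"
    proof
      fix p assume p: "p \<in> topspace X - {y}"
      then have "h p \<in> topspace Z - {b}" using F(5) by blast
      then show "p \<in> W \<union> W2" using p AB by (auto simp: W_def W2_def)
    qed
  qed
  have W2ne: "W2 \<noteq> {}"
  proof -
    obtain q where q: "q \<in> B - {b}" using Bb by blast
    then have "q \<in> topspace Z - {b}" using BbZ by blast
    then have "g q \<in> W2" using q F(4) F(6) by (auto simp: W2_def)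
    then show ?thesis by blast
  qed
  have aZ: "a \<in> topspace Z - {b}" using a AZ by blast
  define u where "u = g a"
  have uW: "u \<in> W" using aZ F(4) F(6) a by (auto simp: W_def u_def)
  have nc: "\<not> connectedin X (W - {u})"
    by (rule cut_piece[OF X cut y oW oW2 WW2 WU W2ne uW])
  have "connectedin (subtopology Z (topspace Z - {b})) (A - {a})"
    using c AZ connectedin_subtopology by blast
  then have "connectedin (subtopology X (topspace X - {y})) (g ` (A - {a}))"
    using connectedin_continuous_map_image[OF F(2)] by blast
  then have c2: "connectedin X (g ` (A - {a}))"
    using connectedin_subtopology by blast
  have "g ` (A - {a}) = W - {u}"
  proof
    show "g ` (A - {a}) \<subseteq> W - {u}"
    proof
      fix p assume "p \<in> g ` (A - {a})"
      then obtain q where q: "q \<in> A" "q \<noteq> a" "p = g q" by blast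
      have qZ: "q \<in> topspace Z - {b}" using q AZ by blast
      have "g q \<noteq> g a" using q F(4) qZ aZ by metis
      then show "p \<in> W - {u}" using q qZ F(4) F(6) by (auto simp: W_def u_def)
    qed
    show "W - {u} \<subseteq> g ` (A - {a})"
    proof
      fix p assume p: "p \<in> W - {u}"
      then have p1: "p \<in> topspace X - {y}" "h p \<in> A" by (auto simp: W_def)
      have "g (h p) = p" using F(3) p1 by blast
      then have "h p \<noteq> a" using p by (auto simp: u_def)
      then show "p \<in> g ` (A - {a})" using p1 \<open>g (h p) = p\<close> by (metis DiffI empty_iff image_eqI insert_iff)
    qed
  qed
  then show False using nc c2 by simp
qed

lemma conn_main:
  assumes X: "connected_space X" and sepX: "separable_space X" and t1X: "t1_space X"
    and unc: "uncountable (topspace X)" and t1Z: "t1_space Z"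
    and HX: "\<forall>x\<in>topspace X. \<exists>w\<in>topspace Z.
              subtopology X (topspace X - {x}) homeomorphic_space subtopology Z (topspace Z - {w})"
    and HZ: "\<forall>w\<in>topspace Z. \<exists>x\<in>topspace X.
              subtopology X (topspace X - {x}) homeomorphic_space subtopology Z (topspace Z - {w})"
  shows "connected_space Z"
proof (rule ccontr)
  assume "\<not> connected_space Z"
  then obtain A B where A: "openin Z A" and B: "openin Z B" and AB: "A \<union> B = topspace Z" "A \<inter> B = {}"
    and Ane: "A \<noteq> {}" and Bne: "B \<noteq> {}"
    unfolding connected_space_eq by blast
  have oSX: "openin X (topspace X - {p})" for p using t1X by (simp add: t1_space_openin_delete_alt)
  have oZd: "openin Z (U - {p})" if "openin Z U" for U p using t1Z that by (simp add: t1_space_openin_delete_alt)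
  have oSZ: "openin Z (topspace Z - {p})" for p using oZd[OF openin_topspace] .
  have noiso: "\<forall>z\<in>topspace Z. \<not> openin Z {z}"
  proof (intro ballI notI)
    fix z assume z: "z \<in> topspace Z" and oz: "openin Z {z}"
    have "\<exists>w\<in>topspace Z. w \<noteq> z"
    proof (cases "z \<in> A")
      case True
      obtain q where q: "q \<in> B" using Bne by blast
      then have "q \<in> topspace Z" "q \<noteq> z" using AB True by auto
      then show ?thesis by blast
    next
      case False
      obtain q where q: "q \<in> A" using Ane by blast
      then have "q \<in> topspace Z" "q \<noteq> z" using AB False by auto
      then show ?thesis by blast
    qed
    then obtain w where w: "w \<in> topspace Z" "w \<noteq> z" by blast
    obtain y where y: "y \<in> topspace X" and
      hom: "subtopology X (topspace X - {y}) homeomorphic_space subtopology Z (topspace Z - {w})"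
      using HZ w by blast
    then obtain h g where hm: "homeomorphic_maps (subtopology X (topspace X - {y})) (subtopology Z (topspace Z - {w})) h g"
      unfolding homeomorphic_space_def by blast
    have SXs: "topspace X - {y} \<subseteq> topspace X" and SZs: "topspace Z - {w} \<subseteq> topspace Z" by auto
    note F = hm_facts[OF hm SXs SZs]
    have zs: "{z} \<subseteq> topspace Z - {w}" using z w by blast
    have o: "openin X {p \<in> topspace X - {y}. h p \<in> {z}}"
      by (rule pre_open[OF oSX hm SZs oz zs])
    have zS: "z \<in> topspace Z - {w}" using zs by blast
    have eq: "{p \<in> topspace X - {y}. h p \<in> {z}} = {g z}"
    proof
      show "{p \<in> topspace X - {y}. h p \<in> {z}} \<subseteq> {g z}" using F(3) by force
      show "{g z} \<subseteq> {p \<in> topspace X - {y}. h p \<in> {z}}" using F(4) F(6) zS by auto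
    qed
    have gz: "g z \<in> topspace X - {y}" using F(6) zS by blast
    have "openin X {g z}" using o eq by simp
    moreover have "closedin X {g z}" using closedin_t1_singleton[OF t1X] gz by blast
    ultimately have "{g z} = {} \<or> {g z} = topspace X" using X connected_space_clopen_in by blast
    then show False using gz y by (metis Diff_iff empty_iff insert_iff)
  qed
  have cutgen: "pieces Z 2 (topspace Z - {z})"
    if "openin Z A'" "openin Z B'" "A' \<inter> B' = {}" "A' \<union> B' = topspace Z" "B' \<noteq> {}" "z \<in> A'" for A' B' z
  proof (rule pieces2I[of Z "A' - {z}" B'])
    show "openin Z (A' - {z})" using oZd that by blast
    show "openin Z B'" "B' \<noteq> {}" using that by blast+
    show "A' - {z} \<noteq> {}"
    proof
      assume "A' - {z} = {}"
      then have "A' = {z}" using that by blast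
      then show False using noiso that by auto
    qed
    show "(A' - {z}) \<inter> B' = {}" "A' - {z} \<union> B' = topspace Z - {z}" using that by blast+
  qed
  have cutZ: "\<forall>z\<in>topspace Z. pieces Z 2 (topspace Z - {z})"
  proof
    fix z assume z: "z \<in> topspace Z"
    show "pieces Z 2 (topspace Z - {z})"
    proof (cases "z \<in> A")
      case True then show ?thesis using cutgen[OF A B AB(2) AB(1) Bne] by blast
    next
      case False
      then have "z \<in> B" using z AB by blast
      moreover have "B \<inter> A = {}" "B \<union> A = topspace Z" using AB by blast+
      ultimately show ?thesis using cutgen[OF B A _ _ Ane] by blast
    qed
  qed
  have transfer: "pieces X n (topspace X - {x})"
    if x: "x \<in> topspace X" and PZ: "\<forall>z\<in>topspace Z. pieces Z n (topspace Z - {z})" for x n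
  proof -
    obtain w where w: "w \<in> topspace Z" and
      hom: "subtopology X (topspace X - {x}) homeomorphic_space subtopology Z (topspace Z - {w})"
      using HX x by blast
    then obtain h g where hm: "homeomorphic_maps (subtopology X (topspace X - {x})) (subtopology Z (topspace Z - {w})) h g"
      unfolding homeomorphic_space_def by blast
    show ?thesis using pieces_transfer[OF oSX oSZ hm] PZ w by blast
  qed
  have cutX: "\<forall>u\<in>topspace X. pieces X 2 (topspace X - {u})"
    using transfer cutZ by blast
  have p3gen: "pieces Z 3 (topspace Z - {z})"
    if AB': "openin Z A'" "openin Z B'" "A' \<inter> B' = {}" "A' \<union> B' = topspace Z" "B' \<noteq> {}" and z: "z \<in> A'" for A' B' z
  proof -
    have nc: "\<not> connectedin Z (A' - {z})"
      by (rule sepA[OF X t1X t1Z cutX noiso HZ AB' z])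
    have "A' - {z} \<subseteq> topspace Z" using AB' by blast
    then obtain E1 E2 where E: "openin Z E1" "openin Z E2" "A' - {z} \<subseteq> E1 \<union> E2"
      "E1 \<inter> E2 \<inter> (A' - {z}) = {}" "E1 \<inter> (A' - {z}) \<noteq> {}" "E2 \<inter> (A' - {z}) \<noteq> {}"
      using nc unfolding connectedin by blast
    have oA: "openin Z (A' - {z})" using oZd AB' by blast
    show ?thesis
    proof (rule pieces3I[of Z "E1 \<inter> (A' - {z})" "E2 \<inter> (A' - {z})" B'])
      show "openin Z (E1 \<inter> (A' - {z}))" "openin Z (E2 \<inter> (A' - {z}))"
        using E oA by auto
      show "openin Z B'" "B' \<noteq> {}" using AB' by blast+
      show "E1 \<inter> (A' - {z}) \<noteq> {}" "E2 \<inter> (A' - {z}) \<noteq> {}" using E by blast+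
      show "E1 \<inter> (A' - {z}) \<inter> (E2 \<inter> (A' - {z})) = {}" using E(4) by blast
      show "E1 \<inter> (A' - {z}) \<inter> B' = {}" "E2 \<inter> (A' - {z}) \<inter> B' = {}" using AB' by blast+
      show "E1 \<inter> (A' - {z}) \<union> E2 \<inter> (A' - {z}) \<union> B' = topspace Z - {z}"
        using E(3) AB' z by blast
    qed
  qed
  have p3Z: "\<forall>z\<in>topspace Z. pieces Z 3 (topspace Z - {z})"
  proof
    fix z assume z: "z \<in> topspace Z"
    show "pieces Z 3 (topspace Z - {z})"
    proof (cases "z \<in> A")
      case True then show ?thesis using p3gen[OF A B AB(2) AB(1) Bne] by blast
    next
      case False
      then have "z \<in> B" using z AB by blast
      moreover have "B \<inter> A = {}" "B \<union> A = topspace Z" using AB by blast+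
      ultimately show ?thesis using p3gen[OF B A _ _ Ane] by blast
    qed
  qed
  have "\<forall>x\<in>topspace X. pieces X 3 (topspace X - {x})"
    using transfer p3Z by blast
  then have "countable (topspace X)" using triod_countable[OF X sepX] by blast
  then show False using unc by blast
qed




theorem theorem7p4:
  fixes X :: "'a topology" and Z :: "'b topology" and f :: "'a \<Rightarrow> 'b"
  assumes "connected_space X" and "separable_space X" and "tychonoff_space X"
    and "bij_betw f (topspace X) (topspace Z)"
    and "\<forall>x \<in> topspace X.
           subtopology X (topspace X - {x}) homeomorphic_space
           subtopology Z (topspace Z - {f x})"
  shows "connected_space Z \<and> separable_space Z \<and> tychonoff_space Z"
proof -
  note X = assms(1) and sepX = assms(2)
  have t1X: "t1_space X" and crX: "completely_regular_space X"
    using assms(3) by (auto simp: tychonoff_space_def)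
  have fim: "f ` topspace X = topspace Z" using assms(4) bij_betw_imp_surj_on by blast
  have oSX: "openin X (topspace X - {p})" for p using t1X by (simp add: t1_space_openin_delete_alt)
  have HX: "\<forall>x\<in>topspace X. \<exists>w\<in>topspace Z.
              subtopology X (topspace X - {x}) homeomorphic_space subtopology Z (topspace Z - {w})"
    using assms(5) fim by blast
  have HZ: "\<forall>w\<in>topspace Z. \<exists>x\<in>topspace X.
              subtopology X (topspace X - {x}) homeomorphic_space subtopology Z (topspace Z - {w})"
  proof
    fix w assume "w \<in> topspace Z"
    then obtain x where "x \<in> topspace X" "w = f x" using fim by blast
    then show "\<exists>x\<in>topspace X.
              subtopology X (topspace X - {x}) homeomorphic_space subtopology Z (topspace Z - {w})"
      using assms(5) by blast
  qed
  have subZ: "t1_space (subtopology Z (topspace Z - {w})) \<and>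
      completely_regular_space (subtopology Z (topspace Z - {w})) \<and>
      separable_space (subtopology Z (topspace Z - {w}))" if w: "w \<in> topspace Z" for w
  proof -
    obtain x where x: "x \<in> topspace X" and
      hom: "subtopology X (topspace X - {x}) homeomorphic_space subtopology Z (topspace Z - {w})"
      using HZ w by blast
    have a1: "t1_space (subtopology X (topspace X - {x}))" using t1X by (rule t1_space_subtopology)
    have a2: "completely_regular_space (subtopology X (topspace X - {x}))"
      using crX by (rule completely_regular_space_subtopology)
    have a3: "separable_space (subtopology X (topspace X - {x}))"
      by (rule separable_space_open_subset[OF sepX oSX])
    show ?thesis
      using iffD1[OF homeomorphic_t1_space[OF hom] a1] iffD1[OF homeomorphic_completely_regular_space[OF hom] a2]
        iffD1[OF homeomorphic_separable_space[OF hom] a3] by (intro conjI)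
  qed
  have sub1: "\<forall>w\<in>topspace Z. t1_space (subtopology Z (topspace Z - {w}))"
    and sub2: "\<forall>w\<in>topspace Z. completely_regular_space (subtopology Z (topspace Z - {w}))"
    and sub3: "\<forall>w\<in>topspace Z. separable_space (subtopology Z (topspace Z - {w}))"
    using subZ by simp_all
  have sepZ: "separable_space Z" by (rule Z_sep[OF sub3])
  show ?thesis
  proof (cases "\<exists>a\<in>topspace X. \<exists>b\<in>topspace X. a \<noteq> b")
    case True
    then obtain a b where ab: "a \<in> topspace X" "b \<in> topspace X" "a \<noteq> b" by blast
    have unc: "uncountable (topspace X)" by (rule conn_uncountable[OF X crX t1X ab])
    have "infinite (topspace X)" using unc countable_finite by blast
    then have inf: "infinite (topspace Z)" using bij_betw_finite[OF assms(4)] by blast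
    have t1Z: "t1_space Z" by (rule Z_t1[OF inf sub1])
    have crZ: "completely_regular_space Z" by (rule Z_cr[OF inf t1Z sub2])
    have cZ: "connected_space Z" by (rule conn_main[OF X sepX t1X unc t1Z HX HZ])
    show ?thesis using cZ sepZ t1Z crZ by (simp add: tychonoff_space_def)
  next
    case False
    have one: "p = q" if "p \<in> topspace Z" "q \<in> topspace Z" for p q
    proof -
      have "p \<in> f ` topspace X" "q \<in> f ` topspace X" using that fim by simp_all
      then obtain a b where a: "a \<in> topspace X" "p = f a" and b: "b \<in> topspace X" "q = f b"
        by (elim imageE)
      have "a = b" using False a(1) b(1) by blast
      then show ?thesis using a b by simp
    qed
    have cZ: "connected_space Z"
      unfolding connected_space_eq
    proof (intro notI, elim exE conjE)
      fix E1 E2 assume "openin Z E1" "openin Z E2" "E1 \<union> E2 = topspace Z" "E1 \<inter> E2 = {}" "E1 \<noteq> {}" "E2 \<noteq> {}"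
      then obtain p q where "p \<in> E1" "q \<in> E2" "p \<in> topspace Z" "q \<in> topspace Z" by blast
      then show False using one \<open>E1 \<inter> E2 = {}\<close> by blast
    qed
    have t1Z: "t1_space Z" unfolding t1_space_def using one by blast
    have crZ: "completely_regular_space Z"
      unfolding completely_regular_space_def
    proof (intro allI impI)
      fix C z assume Cz: "closedin Z C \<and> z \<in> topspace Z - C"
      then have "C = {}" using one closedin_subset by blast
      then show "\<exists>f::_\<Rightarrow>real. continuous_map Z (top_of_set {0..1}) f \<and> f z = 0 \<and> f ` C \<subseteq> {1}"
        by (intro exI[of _ "\<lambda>x. 0::real"]) simp
    qed
    show ?thesis using cZ sepZ t1Z crZ by (simp add: tychonoff_space_def)
  qed
qed


end
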